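(* Let $I\subset\mathbb{R}$ be an interval and let $M,N\colon I^2\to I$ be means. Let $\mathcal{A}_{M,N}$ be the set of all $(x,y)\in I^2$ such that the sequence $\big((M_n,N_n)(x,y)\big)_{n=1}^\infty$ converges to a point of the diagonal $\{(t,t)\colon t\in I\}$. Then $\mathcal{A}_{M,N}$ is a maximal subset of $I^2$ on which all $(M,N)$-invariant means are equal to each other; that is, any two $(M,N)$-invariant means coincide at every point of $\mathcal{A}_{M,N}$, and for every $(x,y)\in I^2\setminus\mathcal{A}_{M,N}$ there exist two $(M,N)$-invariant means taking different values at $(x,y)$.
   Context: A function $K\colon I^2\to\mathbb{R}$ is a mean in $I$ if $\min(x,y)\le K(x,y)\le\max(x,y)$ for all $x,y\in I$. For means $M,N\colon I^2\to I$, $(M_n,N_n):=(M,N)^n$ denotes the $n$-th iterate of the map $(x,y)\mapsto(M(x,y),N(x,y))$. A mean $K\colon I^2\to I$ is $(M,N)$-invariant if $K(M(x,y),N(x,y))=K(x,y)$ for all $x,y\in I$. *)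

theory Defs
  imports "HOL-Analysis.Analysis"
begin

definition is_mean :: "real set \<Rightarrow> (real \<Rightarrow> real \<Rightarrow> real) \<Rightarrow> bool" where
  "is_mean I K \<longleftrightarrow> (\<forall>x\<in>I. \<forall>y\<in>I. min x y \<le> K x y \<and> K x y \<le> max x y)"

definition MN_iter :: "(real \<Rightarrow> real \<Rightarrow> real) \<Rightarrow> (real \<Rightarrow> real \<Rightarrow> real) \<Rightarrow> nat \<Rightarrow> real \<times> real \<Rightarrow> real \<times> real" where
  "MN_iter M N n = ((\<lambda>(x, y). (M x y, N x y)) ^^ n)"

definition invariant_mean :: "real set \<Rightarrow> (real \<Rightarrow> real \<Rightarrow> real) \<Rightarrow> (real \<Rightarrow> real \<Rightarrow> real) \<Rightarrow> (real \<Rightarrow> real \<Rightarrow> real) \<Rightarrow> bool" where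
  "invariant_mean I M N K \<longleftrightarrow> is_mean I K \<and> (\<forall>x\<in>I. \<forall>y\<in>I. K x y \<in> I) \<and>
     (\<forall>x\<in>I. \<forall>y\<in>I. K (M x y) (N x y) = K x y)"

definition conv_set :: "real set \<Rightarrow> (real \<Rightarrow> real \<Rightarrow> real) \<Rightarrow> (real \<Rightarrow> real \<Rightarrow> real) \<Rightarrow> (real \<times> real) set" where
  "conv_set I M N = {(x, y). x \<in> I \<and> y \<in> I \<and>
     (\<exists>t\<in>I. (\<lambda>n. MN_iter M N n (x, y)) \<longlonglongrightarrow> (t, t))}"

end

theory Submission
  imports Defs
begin

definition lo :: "(real \<Rightarrow> real \<Rightarrow> real) \<Rightarrow> (real \<Rightarrow> real \<Rightarrow> real) \<Rightarrow> real \<Rightarrow> real \<Rightarrow> real" where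
  "lo M N x y = (SUP n. min (fst (MN_iter M N n (x,y))) (snd (MN_iter M N n (x,y))))"
definition hi :: "(real \<Rightarrow> real \<Rightarrow> real) \<Rightarrow> (real \<Rightarrow> real \<Rightarrow> real) \<Rightarrow> real \<Rightarrow> real \<Rightarrow> real" where
  "hi M N x y = (INF n. max (fst (MN_iter M N n (x,y))) (snd (MN_iter M N n (x,y))))"

lemma iter_Suc_left:
  "MN_iter M N (Suc n) p = (M (fst (MN_iter M N n p)) (snd (MN_iter M N n p)),
                            N (fst (MN_iter M N n p)) (snd (MN_iter M N n p)))"
  unfolding MN_iter_def by (simp add: case_prod_beta)

lemma iter_Suc_right:
  "MN_iter M N (Suc n) (x,y) = MN_iter M N n (M x y, N x y)"
  unfolding MN_iter_def by (simp add: funpow_Suc_right del: funpow.simps)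

lemma iter_0: "MN_iter M N 0 p = p"
  unfolding MN_iter_def by simp

lemma iter_in:
  assumes "\<forall>x\<in>I. \<forall>y\<in>I. M x y \<in> I \<and> N x y \<in> I" "x \<in> I" "y \<in> I"
  shows "fst (MN_iter M N n (x,y)) \<in> I \<and> snd (MN_iter M N n (x,y)) \<in> I"
  by (induction n) (use assms in \<open>auto simp: iter_0 iter_Suc_left\<close>)

locale setting =
  fixes I :: "real set" and M N :: "real \<Rightarrow> real \<Rightarrow> real" and x y :: real
  assumes iv: "is_interval I"
    and mM: "is_mean I M" and mN: "is_mean I N"
    and cl: "\<forall>x\<in>I. \<forall>y\<in>I. M x y \<in> I \<and> N x y \<in> I"
    and xI: "x \<in> I" and yI: "y \<in> I"
begin

abbreviation "a n \<equiv> fst (MN_iter M N n (x,y))"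
abbreviation "b n \<equiv> snd (MN_iter M N n (x,y))"
definition "m n = min (a n) (b n)"
definition "X n = max (a n) (b n)"

lemma abI: "a n \<in> I" "b n \<in> I"
  using iter_in[OF cl xI yI] by auto

lemma hM: "min (a n) (b n) \<le> M (a n) (b n) \<and> M (a n) (b n) \<le> max (a n) (b n)"
  using mM abI[of n] unfolding is_mean_def by blast

lemma hN: "min (a n) (b n) \<le> N (a n) (b n) \<and> N (a n) (b n) \<le> max (a n) (b n)"
  using mN abI[of n] unfolding is_mean_def by blast

lemma m_inc: "incseq m"
proof (rule incseq_SucI)
  fix n
  have "min (a n) (b n) \<le> M (a n) (b n)" "min (a n) (b n) \<le> N (a n) (b n)"
    using hM[of n] hN[of n] by auto
  then show "m n \<le> m (Suc n)" unfolding m_def by (simp add: iter_Suc_left)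
qed

lemma X_dec: "decseq X"
proof (rule decseq_SucI)
  fix n
  have "max (a n) (b n) \<ge> M (a n) (b n)" "max (a n) (b n) \<ge> N (a n) (b n)"
    using hM[of n] hN[of n] by auto
  then show "X (Suc n) \<le> X n" unfolding X_def by (simp add: iter_Suc_left)
qed

lemma mX: "m n \<le> X k"
proof -
  have "m n \<le> m (max n k)" using m_inc by (simp add: incseq_def)
  also have "\<dots> \<le> X (max n k)" by (simp add: m_def X_def)
  also have "\<dots> \<le> X k" using X_dec by (simp add: decseq_def)
  finally show ?thesis .
qed

lemma m_lim: "m \<longlonglongrightarrow> lo M N x y"
proof -
  have "bdd_above (range m)" using mX[of _ 0] by (intro bdd_aboveI[of _ "X 0"]) auto
  then have "m \<longlonglongrightarrow> (SUP i. m i)" using LIMSEQ_incseq_SUP m_inc by blast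
  then show ?thesis unfolding lo_def m_def by simp
qed

lemma X_lim: "X \<longlonglongrightarrow> hi M N x y"
proof -
  have "bdd_below (range X)" using mX[of 0] by (intro bdd_belowI[of _ "m 0"]) auto
  then have "X \<longlonglongrightarrow> (INF i. X i)" using LIMSEQ_decseq_INF X_dec by blast
  then show ?thesis unfolding hi_def X_def by simp
qed

lemma lo_le_hi: "lo M N x y \<le> hi M N x y"
  by (intro LIMSEQ_le[OF m_lim X_lim]) (auto simp: m_def X_def)

lemma lo_ge: "min x y \<le> lo M N x y"
  using incseq_le[OF m_inc m_lim, of 0] by (simp add: m_def iter_0)

lemma hi_le: "hi M N x y \<le> max x y"
  using decseq_ge[OF X_dec X_lim, of 0] by (simp add: X_def iter_0)

lemma in_I: "z \<in> I" if "min x y \<le> z" "z \<le> max x y" for z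
proof -
  have h: "\<forall>a\<in>I. \<forall>b\<in>I. \<forall>z. a \<le> z \<and> z \<le> b \<longrightarrow> z \<in> I"
    using iv unfolding is_interval_1 .
  have "min x y \<in> I" "max x y \<in> I" using xI yI by (simp_all add: min_def max_def)
  then show ?thesis using h that by blast
qed

lemma lo_shift: "lo M N (M x y) (N x y) = lo M N x y"
proof -
  have l1: "(\<lambda>n. m (Suc n)) \<longlonglongrightarrow> lo M N x y" using m_lim by (rule LIMSEQ_Suc)
  have S': "setting I M N (M x y) (N x y)" using iv mM mN cl xI yI by unfold_locales auto
  have l2: "setting.m M N (M x y) (N x y) \<longlonglongrightarrow> lo M N (M x y) (N x y)"
    using S' by (rule setting.m_lim)
  have e: "setting.m M N (M x y) (N x y) = (\<lambda>n. m (Suc n))"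
    by (rule ext) (simp only: setting.m_def[OF S'] m_def iter_Suc_right)
  show ?thesis using l2 unfolding e by (rule LIMSEQ_unique[OF _ l1])
qed

lemma hi_shift: "hi M N (M x y) (N x y) = hi M N x y"
proof -
  have l1: "(\<lambda>n. X (Suc n)) \<longlonglongrightarrow> hi M N x y" using X_lim by (rule LIMSEQ_Suc)
  have S': "setting I M N (M x y) (N x y)" using iv mM mN cl xI yI by unfold_locales auto
  have l2: "setting.X M N (M x y) (N x y) \<longlonglongrightarrow> hi M N (M x y) (N x y)"
    using S' by (rule setting.X_lim)
  have e: "setting.X M N (M x y) (N x y) = (\<lambda>n. X (Suc n))"
    by (rule ext) (simp only: setting.X_def[OF S'] X_def iter_Suc_right)
  show ?thesis using l2 unfolding e by (rule LIMSEQ_unique[OF _ l1])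
qed

lemma eq_conv:
  assumes "lo M N x y = hi M N x y"
  shows "(x, y) \<in> conv_set I M N"
proof -
  let ?t = "lo M N x y"
  have X': "X \<longlonglongrightarrow> ?t" using X_lim assms by simp
  have "a \<longlonglongrightarrow> ?t"
    by (rule tendsto_sandwich[OF _ _ m_lim X']) (auto simp: m_def X_def)
  moreover have "b \<longlonglongrightarrow> ?t"
    by (rule tendsto_sandwich[OF _ _ m_lim X']) (auto simp: m_def X_def)
  ultimately have "(\<lambda>n. (a n, b n)) \<longlonglongrightarrow> (?t, ?t)" by (rule tendsto_Pair)
  moreover have "?t \<in> I" by (rule in_I) (use lo_ge lo_le_hi hi_le in linarith)+
  ultimately show ?thesis unfolding conv_set_def using xI yI by auto
qed

end

lemma inv_iter:
  assumes "invariant_mean I M N K" "\<forall>x\<in>I. \<forall>y\<in>I. M x y \<in> I \<and> N x y \<in> I" "x \<in> I" "y \<in> I"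
  shows "K (fst (MN_iter M N n (x,y))) (snd (MN_iter M N n (x,y))) = K x y"
proof (induction n)
  case 0 then show ?case by (simp add: iter_0)
next
  case (Suc n)
  have "fst (MN_iter M N n (x,y)) \<in> I \<and> snd (MN_iter M N n (x,y)) \<in> I"
    using iter_in[OF assms(2-4)] by blast
  then show ?case using assms(1) Suc unfolding invariant_mean_def by (simp add: iter_Suc_left)
qed

lemma inv_val:
  assumes "invariant_mean I M N K" "\<forall>x\<in>I. \<forall>y\<in>I. M x y \<in> I \<and> N x y \<in> I" "x \<in> I" "y \<in> I"
    and lim: "(\<lambda>n. MN_iter M N n (x, y)) \<longlonglongrightarrow> (t, t)"
  shows "K x y = t"
proof -
  let ?a = "\<lambda>n. fst (MN_iter M N n (x,y))" and ?b = "\<lambda>n. snd (MN_iter M N n (x,y))"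
  have "?a \<longlonglongrightarrow> t" using tendsto_fst[OF lim] by simp
  moreover have "?b \<longlonglongrightarrow> t" using tendsto_snd[OF lim] by simp
  ultimately have l1: "(\<lambda>n. min (?a n) (?b n)) \<longlonglongrightarrow> t" and l2: "(\<lambda>n. max (?a n) (?b n)) \<longlonglongrightarrow> t"
    using tendsto_min tendsto_max by fastforce+
  have b: "min (?a n) (?b n) \<le> K x y \<and> K x y \<le> max (?a n) (?b n)" for n
  proof -
    have ab: "?a n \<in> I" "?b n \<in> I" using iter_in[OF assms(2-4)] by blast+
    have "is_mean I K" using assms(1) unfolding invariant_mean_def by blast
    then have "min (?a n) (?b n) \<le> K (?a n) (?b n) \<and> K (?a n) (?b n) \<le> max (?a n) (?b n)"
      unfolding is_mean_def using ab by blast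
    then show ?thesis unfolding inv_iter[OF assms(1-4), of n] .
  qed
  have "t \<le> K x y" using b by (intro LIMSEQ_le_const2[OF l1]) auto
  moreover have "K x y \<le> t" using b by (intro LIMSEQ_le_const[OF l2]) auto
  ultimately show ?thesis by simp
qed

theorem mainTheorem3:
  fixes I :: "real set" and M N :: "real \<Rightarrow> real \<Rightarrow> real"
  assumes "is_interval I"
    and "is_mean I M" and "is_mean I N"
    and "\<forall>x\<in>I. \<forall>y\<in>I. M x y \<in> I \<and> N x y \<in> I"
  shows "(\<forall>K1 K2. invariant_mean I M N K1 \<and> invariant_mean I M N K2 \<longrightarrow>
            (\<forall>(x, y)\<in>conv_set I M N. K1 x y = K2 x y))
       \<and> (\<forall>x\<in>I. \<forall>y\<in>I. (x, y) \<notin> conv_set I M N \<longrightarrow>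
            (\<exists>K1 K2. invariant_mean I M N K1 \<and> invariant_mean I M N K2 \<and> K1 x y \<noteq> K2 x y))"
proof (intro conjI allI impI ballI)
  fix K1 K2 p
  assume K: "invariant_mean I M N K1 \<and> invariant_mean I M N K2" and p: "p \<in> conv_set I M N"
  obtain x y where xy: "p = (x,y)" by force
  from p xy obtain t where "x \<in> I" "y \<in> I" "(\<lambda>n. MN_iter M N n (x, y)) \<longlonglongrightarrow> (t, t)"
    unfolding conv_set_def by auto
  note h = this
  have "K1 x y = t" by (rule inv_val[OF conjunct1[OF K] assms(4) h])
  moreover have "K2 x y = t" by (rule inv_val[OF conjunct2[OF K] assms(4) h])
  ultimately show "case p of (x, y) \<Rightarrow> K1 x y = K2 x y" using xy by simp
next
  fix x y assume xI: "x \<in> I" and yI: "y \<in> I" and nc: "(x, y) \<notin> conv_set I M N"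
  have S: "setting I M N u v" if "u \<in> I" "v \<in> I" for u v
    using assms that by unfold_locales auto
  have "invariant_mean I M N (lo M N)"
    unfolding invariant_mean_def is_mean_def
  proof (intro conjI ballI)
    fix u v assume "u \<in> I" "v \<in> I"
    note T = setting.lo_ge[OF S[OF this]] setting.lo_le_hi[OF S[OF this]] setting.hi_le[OF S[OF this]]
      setting.in_I[OF S[OF this]] setting.lo_shift[OF S[OF this]]
    show "min u v \<le> lo M N u v" by (rule T(1))
    show "lo M N u v \<le> max u v" using T(2,3) by linarith
    show "lo M N u v \<in> I" by (rule T(4)) (use T(1-3) in linarith)+
    show "lo M N (M u v) (N u v) = lo M N u v" by (rule T(5))
  qed
  moreover have "invariant_mean I M N (hi M N)"
    unfolding invariant_mean_def is_mean_def
  proof (intro conjI ballI)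
    fix u v assume "u \<in> I" "v \<in> I"
    note T = setting.lo_ge[OF S[OF this]] setting.lo_le_hi[OF S[OF this]] setting.hi_le[OF S[OF this]]
      setting.in_I[OF S[OF this]] setting.hi_shift[OF S[OF this]]
    show "min u v \<le> hi M N u v" using T(1,2) by linarith
    show "hi M N u v \<le> max u v" by (rule T(3))
    show "hi M N u v \<in> I" by (rule T(4)) (use T(1-3) in linarith)+
    show "hi M N (M u v) (N u v) = hi M N u v" by (rule T(5))
  qed
  moreover have "lo M N x y \<noteq> hi M N x y"
  proof
    assume "lo M N x y = hi M N x y"
    then have "(x, y) \<in> conv_set I M N" by (rule setting.eq_conv[OF S[OF xI yI]])
    with nc show False by simp
  qed
  ultimately show "\<exists>K1 K2. invariant_mean I M N K1 \<and> invariant_mean I M N K2 \<and> K1 x y \<noteq> K2 x y"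
    by (intro exI[of _ "lo M N"] exI[of _ "hi M N"] conjI)
qed

end
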